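(* Let $a_1\ge\cdots\ge a_n$ and $b_1\ge\cdots\ge b_n$ be real numbers such that for every $1\le i<n$, either $\min(a_i,b_i)\ge\max(a_{i+1},b_{i+1})$ or $\{a_i,b_i\}=\{a_{i+1},b_{i+1}\}$; suppose further that $\sum_{i=1}^n a_i=\sum_{i=1}^n b_i$, $\sum_{i=1}^n a_i^2=\sum_{i=1}^n b_i^2$, and \[ \sum_{i=1}^j(a_i-a_j)(a_i-b_j)\ge\sum_{i=1}^j(b_i-a_j)(b_i-b_j)\quad\text{for all }1\le j\le n. \] Then $\sum_{i=1}^n f(a_i)\ge\sum_{i=1}^n f(b_i)$ for every three times differentiable $f:I\to\mathbb{R}$ with $f'''\ge 0$, where $I$ is any interval containing all the $a_i$ and $b_i$. *)

theory Defs
  imports "HOL-Analysis.Analysis"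
begin

end

theory Submission
  imports Defs
begin


lemma is_int_mem: assumes "is_interval (I::real set)" "x \<in> I" "y \<in> I" "x \<le> z" "z \<le> y" shows "z \<in> I"
proof -
  have "\<forall>a\<in>I. \<forall>b\<in>I. \<forall>x. a \<le> x \<and> x \<le> b \<longrightarrow> x \<in> I" using assms(1) by (simp only: is_interval_1)
  then show ?thesis using assms(2-5) by blast
qed

lemma Lam_diff_gen: "((A::real) * (v - lo) + s * (v - lo)^2 / 2) - (A * (u - lo) + s * (u - lo)^2 / 2) = (v - u) * (A + s * ((u + v) / 2 - lo))"
  by (simp add: field_simps power2_eq_square)

lemma div_swap: "((p::real) - q) / (x - y) = (q - p) / (y - x)"
  by (metis minus_diff_eq minus_divide_divide)

lemma eqM2: "(M::real) \<le> a \<Longrightarrow> M \<le> b \<Longrightarrow> a' \<le> M \<Longrightarrow> b' \<le> M \<Longrightarrow> a + b = a' + b' \<Longrightarrow> a = b \<and> a' = b' \<and> a = a'"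
  by (intro conjI) linarith+

lemma mvtI:
  fixes F F' :: "real \<Rightarrow> real"
  assumes I: "is_interval I" and x: "x \<in> I" and y: "y \<in> I" and xy: "x < y"
    and d: "\<And>z. z \<in> I \<Longrightarrow> (F has_real_derivative F' z) (at z within I)"
  shows "\<exists>z. x < z \<and> z < y \<and> F y - F x = (y - x) * F' z"
proof -
  have sub: "{x..y} \<subseteq> I"
  proof
    fix z assume "z \<in> {x..y}"
    then show "z \<in> I" using is_int_mem[OF I x y] by auto
  qed
  have "continuous_on I F" using d by (rule DERIV_continuous_on)
  then have cont: "continuous_on {x..y} F" using sub continuous_on_subset by blast
  have dz: "DERIV F z :> F' z" if "x < z" "z < y" for z
  proof -
    have "{x<..<y} \<subseteq> I" using sub by auto
    then have "{x<..<y} \<subseteq> interior I" using interior_maximal open_greaterThanLessThan by blast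
    then have "z \<in> interior I" using that by auto
    then have "at z within I = at z" by (rule at_within_interior)
    moreover have "z \<in> I" using sub that by auto
    ultimately show ?thesis using d[OF \<open>z \<in> I\<close>] by simp
  qed
  have dif: "F differentiable (at z)" if "x < z" "z < y" for z
    using dz[OF that] real_differentiable_def by blast
  obtain l z where "x < z" "z < y" "DERIV F z :> l" "F y - F x = (y - x) * l"
    using MVT[OF xy cont dif] by blast
  moreover have "l = F' z" using DERIV_unique[OF \<open>DERIV F z :> l\<close> dz[OF \<open>x<z\<close> \<open>z<y\<close>]] .
  ultimately show ?thesis by blast
qed



locale tc =
  fixes I :: "real set" and f f1 f2 f3 :: "real \<Rightarrow> real"
  assumes I: "is_interval I"
    and d1: "\<And>x. x \<in> I \<Longrightarrow> (f has_real_derivative f1 x) (at x within I)"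
    and d2: "\<And>x. x \<in> I \<Longrightarrow> (f1 has_real_derivative f2 x) (at x within I)"
    and d3: "\<And>x. x \<in> I \<Longrightarrow> (f2 has_real_derivative f3 x) (at x within I)"
    and f3: "\<And>x. x \<in> I \<Longrightarrow> f3 x \<ge> 0"
begin

definition sig :: "real \<Rightarrow> real \<Rightarrow> real" where
  "sig a b = (if a = b then f2 a else (f1 (max a b) - f1 (min a b)) / (max a b - min a b))"
definition L :: "real \<Rightarrow> real \<Rightarrow> real \<Rightarrow> real" where
  "L a b x = f1 (min a b) + sig a b * (x - min a b)"
definition phi :: "real \<Rightarrow> real \<Rightarrow> real" where
  "phi a b = (if a = b then f1 a else (f a - f b) / (a - b))"

lemma inI: "x \<in> I \<Longrightarrow> y \<in> I \<Longrightarrow> x \<le> z \<Longrightarrow> z \<le> y \<Longrightarrow> z \<in> I"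
  using is_int_mem[OF I] by blast

lemma f2_mono: assumes "x \<in> I" "y \<in> I" "x \<le> y" shows "f2 x \<le> f2 y"
proof (cases "x = y")
  case False
  then have "x < y" using assms by auto
  then obtain z where z: "x < z" "z < y" "f2 y - f2 x = (y - x) * f3 z"
    using mvtI[OF I assms(1,2) _ d3] by blast
  have "z \<in> I" using inI[OF assms(1,2)] z by auto
  then have "f3 z \<ge> 0" by (rule f3)
  then show ?thesis using z by (smt (verit) mult_nonneg_nonneg)
qed simp

lemma mvt1: assumes "x \<in> I" "y \<in> I" "x < y"
  shows "\<exists>z. x < z \<and> z < y \<and> f1 y - f1 x = (y - x) * f2 z"
  using mvtI[OF I assms d2] by blast

lemma phi_mul: "(a - b) * phi a b = f a - f b"
  unfolding phi_def by auto



lemma chord_in: assumes "lo \<in> I" "hi \<in> I" "lo < hi" "lo \<le> x" "x \<le> hi"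
  shows "f1 x \<le> f1 lo + (f1 hi - f1 lo) / (hi - lo) * (x - lo)"
proof (cases "x = lo \<or> x = hi")
  case True then show ?thesis using assms by auto
next
  case False
  then have lx: "lo < x" and xh: "x < hi" using assms by auto
  have xI: "x \<in> I" using inI[OF assms(1,2,4,5)] .
  obtain z1 where z1: "lo < z1" "z1 < x" "f1 x - f1 lo = (x - lo) * f2 z1" using mvt1[OF assms(1) xI lx] by blast
  obtain z2 where z2: "x < z2" "z2 < hi" "f1 hi - f1 x = (hi - x) * f2 z2" using mvt1[OF xI assms(2) xh] by blast
  have "z1 \<in> I" "z2 \<in> I" using inI[OF assms(1,2)] z1 z2 lx xh by auto
  then have m: "f2 z1 \<le> f2 z2" using f2_mono z1 z2 by auto
  have "(hi - x) * f2 z1 \<le> (hi - x) * f2 z2" using m xh by (intro mult_left_mono) auto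
  then have "f1 hi - f1 lo \<ge> (hi - lo) * f2 z1" using z1 z2 by (simp add: algebra_simps)
  then have s: "(f1 hi - f1 lo) / (hi - lo) \<ge> f2 z1" using assms(3) by (simp add: field_simps)
  have "(x - lo) * f2 z1 \<le> (x - lo) * ((f1 hi - f1 lo) / (hi - lo))" using s lx by (intro mult_left_mono) auto
  then show ?thesis using z1 by (simp add: algebra_simps)
qed

lemma chord_out: assumes "lo \<in> I" "hi \<in> I" "lo < hi" "x \<in> I" "x \<le> lo \<or> hi \<le> x"
  shows "f1 x \<ge> f1 lo + (f1 hi - f1 lo) / (hi - lo) * (x - lo)"
proof -
  define s where "s = (f1 hi - f1 lo) / (hi - lo)"
  obtain z0 where z0: "lo < z0" "z0 < hi" "f1 hi - f1 lo = (hi - lo) * f2 z0" using mvt1[OF assms(1,2,3)] by blast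
  have z0I: "z0 \<in> I" using inI[OF assms(1,2)] z0 by auto
  have sz: "s = f2 z0" unfolding s_def using z0 assms(3) by (simp add: field_simps)
  have "f1 x \<ge> f1 lo + s * (x - lo)"
  proof (cases "x = lo \<or> x = hi")
    case True then show ?thesis using assms unfolding s_def by (auto simp: field_simps)
  next
    case False
    show ?thesis
    proof (cases "x \<le> lo")
      case True
      then have xl: "x < lo" using False by auto
      obtain z where z: "x < z" "z < lo" "f1 lo - f1 x = (lo - x) * f2 z" using mvt1[OF assms(4,1) xl] by blast
      have "z \<in> I" using inI[OF assms(4,1)] z by auto
      then have "f2 z \<le> s" using sz f2_mono z0I z z0 by auto
      then have "(lo - x) * f2 z \<le> (lo - x) * s" using xl by (intro mult_left_mono) auto
      then show ?thesis using z by (simp add: algebra_simps)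
    next
      case False2: False
      then have hx: "hi < x" using assms(5) False by auto
      obtain z where z: "hi < z" "z < x" "f1 x - f1 hi = (x - hi) * f2 z" using mvt1[OF assms(2,4) hx] by blast
      have "z \<in> I" using inI[OF assms(2,4)] z by auto
      then have "f2 z \<ge> s" using sz f2_mono z0I z z0 by auto
      then have "(x - hi) * f2 z \<ge> (x - hi) * s" using hx by (intro mult_left_mono) auto
      moreover have "f1 hi = f1 lo + s * (hi - lo)" unfolding s_def using assms(3) by simp
      ultimately show ?thesis using z by (simp add: algebra_simps)
    qed
  qed
  then show ?thesis unfolding s_def .
qed

lemma tangent: assumes "p \<in> I" "x \<in> I" shows "f1 x \<ge> f1 p + f2 p * (x - p)"
proof (cases "x = p")
  case False
  show ?thesis
  proof (cases "p < x")
    case True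
    obtain z where z: "p < z" "z < x" "f1 x - f1 p = (x - p) * f2 z" using mvt1[OF assms True] by blast
    have "z \<in> I" using inI[OF assms] z by auto
    then have "f2 p \<le> f2 z" using f2_mono assms z by auto
    then have "(x - p) * f2 p \<le> (x - p) * f2 z" using True by (intro mult_left_mono) auto
    then show ?thesis using z by (simp add: algebra_simps)
  next
    case False2: False
    then have xp: "x < p" using False by auto
    obtain z where z: "x < z" "z < p" "f1 p - f1 x = (p - x) * f2 z" using mvt1[OF assms(2,1) xp] by blast
    have "z \<in> I" using inI[OF assms(2,1)] z by auto
    then have "f2 z \<le> f2 p" using f2_mono assms z by auto
    then have "(p - x) * f2 z \<le> (p - x) * f2 p" using xp by (intro mult_left_mono) auto
    then show ?thesis using z by (simp add: algebra_simps)
  qed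
qed simp

lemma P1: assumes "a \<in> I" "b \<in> I" "x \<in> I" "x \<le> min a b \<or> max a b \<le> x"
  shows "L a b x \<le> f1 x"
proof (cases "a = b")
  case True then show ?thesis using tangent[OF assms(1,3)] by (simp add: L_def sig_def)
next
  case False
  then have "min a b < max a b" by auto
  moreover have "min a b \<in> I" "max a b \<in> I" using assms by (auto simp: min_def max_def)
  ultimately show ?thesis using chord_out[of "min a b" "max a b" x] assms False by (simp add: L_def sig_def)
qed

lemma P2: assumes "a \<in> I" "b \<in> I" "min a b \<le> x" "x \<le> max a b"
  shows "f1 x \<le> L a b x"
proof (cases "a = b")
  case True then show ?thesis using assms by (simp add: L_def sig_def)
next
  case False
  then have "min a b < max a b" by auto
  moreover have "min a b \<in> I" "max a b \<in> I" using assms by (auto simp: min_def max_def)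
  ultimately show ?thesis using chord_in[of "min a b" "max a b" x] assms False by (simp add: L_def sig_def)
qed

end

context tc begin

definition Lam :: "real \<Rightarrow> real \<Rightarrow> real \<Rightarrow> real" where
  "Lam a b x = f1 (min a b) * (x - min a b) + sig a b * (x - min a b)^2 / 2"

lemma Lam_diff: "Lam a b v - Lam a b u = (v - u) * L a b ((u + v) / 2)"
  unfolding Lam_def L_def using Lam_diff_gen[of "f1 (min a b)" v "min a b" "sig a b" u] by simp

lemma h_deriv: "x \<in> I \<Longrightarrow> ((\<lambda>x. f x - Lam a b x) has_real_derivative (f1 x - L a b x)) (at x within I)"
  unfolding Lam_def L_def
  by (auto intro!: derivative_eq_intros d1 simp: field_simps)

lemma h_mono: assumes "u \<in> I" "v \<in> I" "u < v" "\<And>z. u < z \<Longrightarrow> z < v \<Longrightarrow> L a b z \<le> f1 z"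
  shows "f v - f u \<ge> (v - u) * L a b ((u + v) / 2)"
proof -
  obtain z where z: "u < z" "z < v" "(f v - Lam a b v) - (f u - Lam a b u) = (v - u) * (f1 z - L a b z)"
    using mvtI[OF I assms(1,2,3) h_deriv] by blast
  have "0 \<le> (v - u) * (f1 z - L a b z)" using assms(3) assms(4)[OF z(1,2)] by simp
  then show ?thesis using z Lam_diff[of a b v u] by simp
qed

lemma h_anti: assumes "u \<in> I" "v \<in> I" "u < v" "\<And>z. u < z \<Longrightarrow> z < v \<Longrightarrow> f1 z \<le> L a b z"
  shows "f v - f u \<le> (v - u) * L a b ((u + v) / 2)"
proof -
  obtain z where z: "u < z" "z < v" "(f v - Lam a b v) - (f u - Lam a b u) = (v - u) * (f1 z - L a b z)"
    using mvtI[OF I assms(1,2,3) h_deriv] by blast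
  have "(v - u) * (f1 z - L a b z) \<le> 0" using assms(3) assms(4)[OF z(1,2)] by (simp add: mult_nonneg_nonpos)
  then show ?thesis using z Lam_diff[of a b v u] by simp
qed

lemma phi_sym: "phi a b = phi b a"
proof -
  have "(f a - f b) / (a - b) = (f b - f a) / (b - a)" by (metis minus_diff_eq minus_divide_divide)
  then show ?thesis unfolding phi_def by auto
qed

lemma phi_minmax: "phi a b = phi (min a b) (max a b)"
proof (cases "a \<le> b")
  case True then show ?thesis by simp
next
  case False then have "min a b = b" "max a b = a" by auto
  then show ?thesis using phi_sym by simp
qed

lemma A: assumes "a \<in> I" "b \<in> I" shows "phi a b \<le> L a b ((a + b) / 2)"
proof (cases "a = b")
  case True then show ?thesis by (simp add: phi_def L_def)
next
  case False
  define lo where "lo = min a b"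
  define hi where "hi = max a b"
  have lh: "lo < hi" using False by (auto simp: lo_def hi_def)
  have I2: "lo \<in> I" "hi \<in> I" using assms by (auto simp: lo_def hi_def min_def max_def)
  have F: "f hi - f lo \<le> (hi - lo) * L a b ((lo + hi) / 2)"
    using h_anti[OF I2 lh] P2[OF assms] unfolding lo_def hi_def by auto
  have C: "(lo + hi) / 2 = (a + b) / 2" by (auto simp: lo_def hi_def min_def max_def)
  have "phi a b = (f hi - f lo) / (hi - lo)"
  proof -
    have "phi a b = phi lo hi" using phi_minmax[of a b] unfolding lo_def hi_def .
    also have "\<dots> = (f lo - f hi) / (lo - hi)" using lh by (simp add: phi_def)
    also have "\<dots> = (f hi - f lo) / (hi - lo)" by (rule div_swap)
    finally show ?thesis .
  qed
  also have "\<dots> \<le> L a b ((lo + hi) / 2)" using F lh by (simp add: pos_divide_le_eq mult.commute)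
  finally show ?thesis unfolding C .
qed

lemma B: assumes "a \<in> I" "b \<in> I" "a' \<in> I" "b' \<in> I" "max a' b' \<le> min a b \<or> max a b \<le> min a' b'"
  shows "L a b ((a' + b') / 2) \<le> phi a' b'"
proof (cases "a' = b'")
  case True then show ?thesis using P1[OF assms(1,2,3)] assms(5) by (simp add: phi_def)
next
  case False
  define lo where "lo = min a' b'"
  define hi where "hi = max a' b'"
  have lh: "lo < hi" using False by (auto simp: lo_def hi_def)
  have I2: "lo \<in> I" "hi \<in> I" using assms by (auto simp: lo_def hi_def min_def max_def)
  have "L a b z \<le> f1 z" if "lo < z" "z < hi" for z
  proof -
    have "z \<in> I" using inI[OF I2] that by auto
    moreover have "z \<le> min a b \<or> max a b \<le> z" using assms(5) that unfolding lo_def hi_def by auto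
    ultimately show ?thesis using P1[OF assms(1,2)] by auto
  qed
  then have F: "f hi - f lo \<ge> (hi - lo) * L a b ((lo + hi) / 2)"
    using h_mono[OF I2 lh] by auto
  have C: "(lo + hi) / 2 = (a' + b') / 2" by (auto simp: lo_def hi_def min_def max_def)
  have P: "phi a' b' = (f hi - f lo) / (hi - lo)"
  proof -
    have "phi a' b' = phi lo hi" using phi_minmax[of a' b'] unfolding lo_def hi_def .
    also have "\<dots> = (f lo - f hi) / (lo - hi)" using lh by (simp add: phi_def)
    also have "\<dots> = (f hi - f lo) / (hi - lo)" by (rule div_swap)
    finally show ?thesis .
  qed
  have "L a b ((lo + hi) / 2) \<le> (f hi - f lo) / (hi - lo)" using F lh by (simp add: pos_le_divide_eq mult.commute)
  then show ?thesis unfolding P C .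
qed

lemma L_lin: "L a b u - L a b v = sig a b * (u - v)"
  unfolding L_def by (simp add: algebra_simps)

lemma psi: assumes "a \<in> I" "b \<in> I" "a' \<in> I" "b' \<in> I"
    "max a' b' \<le> min a b \<or> (a' = a \<and> b' = b)"
  shows "\<exists>\<psi>. sig a' b' \<le> \<psi> \<and> \<psi> \<le> sig a b \<and> phi a b - phi a' b' = \<psi> * ((a + b) / 2 - (a' + b') / 2)"
proof (cases "a' = a \<and> b' = b")
  case True then show ?thesis by auto
next
  case False
  then have sepd: "max a' b' \<le> min a b" using assms(5) by auto
  show ?thesis
  proof (cases "(a + b) / 2 = (a' + b') / 2")
    case True
    have m: "max a' b' \<le> a" "max a' b' \<le> b" "a' \<le> max a' b'" "b' \<le> max a' b'" using sepd by auto
    have "a + b = a' + b'" using True by simp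
    then have "a = b \<and> a' = b' \<and> a = a'" using eqM2[OF m] by blast
    then show ?thesis by auto
  next
    case False2: False
    define c where "c = (a + b) / 2"
    define c' where "c' = (a' + b') / 2"
    have cc: "c' < c" using sepd False2 unfolding c_def c'_def by (auto simp: min_def max_def split: if_splits)
    have 1: "phi a b \<le> L a b c" using A[OF assms(1,2)] by (simp add: c_def)
    have 2: "L a b c' \<le> phi a' b'" using B[OF assms(1-4)] sepd by (simp add: c'_def)
    have 3: "phi a' b' \<le> L a' b' c'" using A[OF assms(3,4)] by (simp add: c'_def)
    have 4: "L a' b' c \<le> phi a b" using B[OF assms(3,4,1,2)] sepd by (simp add: c_def)
    have u: "phi a b - phi a' b' \<le> sig a b * (c - c')" using 1 2 L_lin[of a b c c'] by linarith
    have l: "sig a' b' * (c - c') \<le> phi a b - phi a' b'" using 3 4 L_lin[of a' b' c c'] by linarith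
    define \<psi> where "\<psi> = (phi a b - phi a' b') / (c - c')"
    have "sig a' b' \<le> \<psi>" using l cc unfolding \<psi>_def by (simp add: field_simps)
    moreover have "\<psi> \<le> sig a b" using u cc unfolding \<psi>_def by (simp add: field_simps)
    moreover have "phi a b - phi a' b' = \<psi> * (c - c')" using cc unfolding \<psi>_def by simp
    ultimately show ?thesis unfolding c_def c'_def by blast
  qed
qed

end


lemma eq_gen: "(phi0::real) = phi1 + psi * D \<Longrightarrow> P * phi0 + R * psi + d * phi1 = (P + d) * phi1 + (R + P * D) * psi"
  by (simp add: algebra_simps)

lemma fin_gen: "(T::real) \<ge> X + Rm * s \<Longrightarrow> T' = T + Y \<Longrightarrow> X + Rm * \<psi> + Y = Z + R' * \<psi> \<Longrightarrow>
   Rm * \<psi> \<le> Rm * s \<Longrightarrow> R' * s' \<le> R' * \<psi> \<Longrightarrow> T' \<ge> Z + R' * s'"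
  by linarith

theorem mainTheorem12:
  fixes a b :: "nat \<Rightarrow> real" and n :: nat
    and I :: "real set" and f f1 f2 f3 :: "real \<Rightarrow> real"
  assumes a_mono: "\<And>i. 1 \<le> i \<Longrightarrow> i < n \<Longrightarrow> a (i + 1) \<le> a i"
    and b_mono: "\<And>i. 1 \<le> i \<Longrightarrow> i < n \<Longrightarrow> b (i + 1) \<le> b i"
    and sep: "\<And>i. 1 \<le> i \<Longrightarrow> i < n \<Longrightarrow>
              min (a i) (b i) \<ge> max (a (i + 1)) (b (i + 1)) \<or> {a i, b i} = {a (i + 1), b (i + 1)}"
    and sum1: "(\<Sum>i=1..n. a i) = (\<Sum>i=1..n. b i)"
    and sum2: "(\<Sum>i=1..n. (a i)\<^sup>2) = (\<Sum>i=1..n. (b i)\<^sup>2)"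
    and ineq: "\<And>j. 1 \<le> j \<Longrightarrow> j \<le> n \<Longrightarrow>
              (\<Sum>i=1..j. (a i - a j) * (a i - b j)) \<ge> (\<Sum>i=1..j. (b i - a j) * (b i - b j))"
    and I_interval: "is_interval I"
    and a_in: "\<And>i. 1 \<le> i \<Longrightarrow> i \<le> n \<Longrightarrow> a i \<in> I"
    and b_in: "\<And>i. 1 \<le> i \<Longrightarrow> i \<le> n \<Longrightarrow> b i \<in> I"
    and d1: "\<And>x. x \<in> I \<Longrightarrow> (f has_real_derivative f1 x) (at x within I)"
    and d2: "\<And>x. x \<in> I \<Longrightarrow> (f1 has_real_derivative f2 x) (at x within I)"
    and d3: "\<And>x. x \<in> I \<Longrightarrow> (f2 has_real_derivative f3 x) (at x within I)"
    and f3_nonneg: "\<And>x. x \<in> I \<Longrightarrow> f3 x \<ge> 0"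
  shows "(\<Sum>i=1..n. f (a i)) \<ge> (\<Sum>i=1..n. f (b i))"
proof -
  interpret tc I f f1 f2 f3
    using I_interval d1 d2 d3 f3_nonneg by unfold_locales auto
  define c where "c i = (a i + b i) / 2" for i
  define T where "T m = (\<Sum>i=1..m. f (a i) - f (b i))" for m
  define P where "P m = (\<Sum>i=1..m. a i - b i)" for m
  define R where "R m = (\<Sum>i=1..m. (a i - b i) * (c i - c m))" for m
  have Rnn: "R j \<ge> 0" if "1 \<le> j" "j \<le> n" for j
  proof -
    have "(\<Sum>i=1..j. (a i - a j) * (a i - b j)) - (\<Sum>i=1..j. (b i - a j) * (b i - b j)) = 2 * R j"
      unfolding R_def c_def sum_subtractf[symmetric] sum_distrib_left
      by (rule sum.cong) (auto simp: field_simps)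
    with ineq[OF that] show ?thesis by linarith
  qed
  have inv: "1 \<le> m \<Longrightarrow> m \<le> n \<Longrightarrow> T m \<ge> P m * phi (a m) (b m) + R m * sig (a m) (b m)" for m
  proof (induction m)
    case 0 then show ?case by simp
  next
    case (Suc m)
    show ?case
    proof (cases "m = 0")
      case True then show ?thesis by (simp add: T_def P_def R_def phi_mul)
    next
      case False
      then have m1: "1 \<le> m" and mn: "m < n" using Suc.prems by auto
      have IH: "T m \<ge> P m * phi (a m) (b m) + R m * sig (a m) (b m)" using Suc.IH m1 mn by auto
      have ins: "a m \<in> I" "b m \<in> I" "a (Suc m) \<in> I" "b (Suc m) \<in> I"
        using a_in b_in m1 mn by auto
      have sepm: "max (a (Suc m)) (b (Suc m)) \<le> min (a m) (b m) \<or> (a (Suc m) = a m \<and> b (Suc m) = b m)"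
      proof -
        have am: "a (Suc m) \<le> a m" "b (Suc m) \<le> b m" using a_mono[OF m1 mn] b_mono[OF m1 mn] by auto
        have "min (a m) (b m) \<ge> max (a (m + 1)) (b (m + 1)) \<or> {a m, b m} = {a (m + 1), b (m + 1)}"
          using sep[OF m1 mn] .
        then show ?thesis
        proof
          assume "{a m, b m} = {a (m + 1), b (m + 1)}"
          then have e: "a m = a (m+1) \<or> a m = b (m+1)" "b m = a (m+1) \<or> b m = b (m+1)"
              "a (m+1) = a m \<or> a (m+1) = b m" "b (m+1) = a m \<or> b (m+1) = b m"
            by blast+
          have "a (Suc m) = a m \<and> b (Suc m) = b m" using e am unfolding Suc_eq_plus1 by linarith
          then show ?thesis by blast
        qed auto
      qed
      obtain \<psi> where ps: "sig (a (Suc m)) (b (Suc m)) \<le> \<psi>" "\<psi> \<le> sig (a m) (b m)"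
        "phi (a m) (b m) - phi (a (Suc m)) (b (Suc m)) = \<psi> * (c m - c (Suc m))"
        using psi[OF ins sepm] unfolding c_def by blast
      have Ts: "T (Suc m) = T m + (a (Suc m) - b (Suc m)) * phi (a (Suc m)) (b (Suc m))"
        unfolding T_def phi_mul by simp
      have Ps: "P (Suc m) = P m + (a (Suc m) - b (Suc m))" unfolding P_def by simp
      have Rs: "R (Suc m) = R m + P m * (c m - c (Suc m))"
      proof -
        have "(\<Sum>i=1..m. (a i - b i) * (c i - c (Suc m))) =
              (\<Sum>i=1..m. (a i - b i) * (c i - c m) + (a i - b i) * (c m - c (Suc m)))"
          by (rule sum.cong) (auto simp: algebra_simps)
        also have "\<dots> = R m + P m * (c m - c (Suc m))"
          unfolding R_def P_def sum.distrib sum_distrib_right ..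
        finally show ?thesis unfolding R_def by simp
      qed
      have R0: "R m \<ge> 0" using Rnn m1 mn by auto
      have R1: "R (Suc m) \<ge> 0" using Rnn Suc.prems by auto
      have i1: "R m * \<psi> \<le> R m * sig (a m) (b m)" using ps(2) R0 by (rule mult_left_mono)
      have i2: "R (Suc m) * sig (a (Suc m)) (b (Suc m)) \<le> R (Suc m) * \<psi>" using ps(1) R1 by (rule mult_left_mono)
      have eq: "P m * phi (a m) (b m) + R m * \<psi> + (a (Suc m) - b (Suc m)) * phi (a (Suc m)) (b (Suc m))
          = P (Suc m) * phi (a (Suc m)) (b (Suc m)) + R (Suc m) * \<psi>"
      proof -
        have "phi (a m) (b m) = phi (a (Suc m)) (b (Suc m)) + \<psi> * (c m - c (Suc m))" using ps(3) by linarith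
        from eq_gen[OF this, of "P m" "R m" "a (Suc m) - b (Suc m)"]
        show ?thesis by (simp only: Ps Rs)
      qed
      have s1: "T (Suc m) \<ge> P m * phi (a m) (b m) + R m * \<psi> + (a (Suc m) - b (Suc m)) * phi (a (Suc m)) (b (Suc m))"
        using IH Ts i1 by linarith
      then show ?thesis using eq i2 by linarith
    qed
  qed
  show ?thesis
  proof (cases "n = 0")
    case True then show ?thesis by simp
  next
    case False
    then have n1: "1 \<le> n" by auto
    have P0: "P n = 0" unfolding P_def sum_subtractf using sum1 by simp
    have S0: "(\<Sum>i=1..n. (a i - b i) * c i) = 0"
    proof -
      have "(\<Sum>i=1..n. (a i - b i) * c i) = ((\<Sum>i=1..n. (a i)\<^sup>2) - (\<Sum>i=1..n. (b i)\<^sup>2)) / 2"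
        unfolding sum_subtractf[symmetric] sum_divide_distrib c_def
        by (rule sum.cong) (auto simp: algebra_simps power2_eq_square)
      then show ?thesis using sum2 by simp
    qed
    have "R n = (\<Sum>i=1..n. (a i - b i) * c i) - P n * c n"
      unfolding R_def P_def sum_distrib_right sum_subtractf[symmetric]
      by (rule sum.cong) (auto simp: algebra_simps)
    then have R0: "R n = 0" using S0 P0 by simp
    have "T n \<ge> 0" using inv[OF n1 order.refl] P0 R0 by simp
    then show ?thesis unfolding T_def sum_subtractf by simp
  qed
qed


end
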